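(* Let $\mathcal{F}$ be a fusion ring with structure constants $(N_{i,j}^k)$, index $1$ being the unit. Suppose there is an index $k_0$ such that $N_{i,j}^{k_0}\neq0$ for all indices $i,j\neq1$. Then $\mathcal{F}$ passes the zero spectrum criterion, i.e. there are no indices $i_1,\dots,i_9$ satisfying all of the following: (1) $N_{i_4,i_1}^{i_6},\ N_{i_5,i_4}^{i_2},\ N_{i_5,i_6}^{i_3},\ N_{i_7,i_9}^{i_1},\ N_{i_2,i_7}^{i_8},\ N_{i_8,i_9}^{i_3}\neq0$; (2) $\sum_kN_{i_4,i_7}^kN_{i_5^*,i_8}^kN_{i_6,i_9^*}^k=0$; (3) $N_{i_2,i_1}^{i_3}=1$; (4) $\sum_kN_{i_5,i_4}^kN_{i_3,i_1^*}^k=1$ or $\sum_kN_{i_2,i_4^*}^kN_{i_3,i_6^*}^k=1$ or $\sum_kN_{i_5^*,i_2}^kN_{i_6,i_1^*}^k=1$; (5) $\sum_kN_{i_2,i_7}^kN_{i_3,i_9^*}^k=1$ or $\sum_kN_{i_8,i_7^*}^kN_{i_3,i_1^*}^k=1$ or $\sum_kN_{i_2^*,i_8}^kN_{i_1,i_9^*}^k=1$.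
   Context: A fusion ring is a ring which is a free $\mathbb{Z}$-module with finite basis $\{b_1,\dots,b_r\}$, $b_ib_j=\sum_kN_{i,j}^kb_k$, $N_{i,j}^k\in\mathbb{Z}_{\ge0}$, associative, unit $b_1$, duality $i\mapsto i^*$ with $N_{i,k}^1=N_{k,i}^1=\delta_{i^*,k}$, and Frobenius reciprocity $N_{i,j}^k=N_{i^*,k}^j=N_{k,j^*}^i$. (If indices as in (1)–(5) exist, the fusion ring admits no categorification over any field; "passing the zero spectrum criterion" means no such indices exist.) *)

theory Defs
  imports Main
begin

text \<open>A fusion ring of rank r: basis indexed by {0..<r}, index 0 is the unit b_1,
  N i j k is the structure constant N_{i,j}^k, d is the duality i -> i*.\<close>

definition fusion_ring :: "nat \<Rightarrow> (nat \<Rightarrow> nat \<Rightarrow> nat \<Rightarrow> nat) \<Rightarrow> (nat \<Rightarrow> nat) \<Rightarrow> bool" where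
  "fusion_ring r N d \<longleftrightarrow>
     0 < r \<and>
     (\<forall>i<r. d i < r) \<and>
     (\<forall>i<r. \<forall>j<r. \<forall>k<r. \<forall>l<r.
        (\<Sum>m<r. N i j m * N m k l) = (\<Sum>m<r. N j k m * N i m l)) \<and>
     (\<forall>i<r. \<forall>k<r. N 0 i k = (if i = k then 1 else 0) \<and> N i 0 k = (if i = k then 1 else 0)) \<and>
     (\<forall>i<r. \<forall>k<r. N i k 0 = (if d i = k then 1 else 0) \<and> N k i 0 = (if d i = k then 1 else 0)) \<and>
     (\<forall>i<r. \<forall>j<r. \<forall>k<r. N i j k = N (d i) k j \<and> N i j k = N k (d j) i)"

definition zero_spectrum_obstruction ::
  "nat \<Rightarrow> (nat \<Rightarrow> nat \<Rightarrow> nat \<Rightarrow> nat) \<Rightarrow> (nat \<Rightarrow> nat) \<Rightarrow>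
   nat \<Rightarrow> nat \<Rightarrow> nat \<Rightarrow> nat \<Rightarrow> nat \<Rightarrow> nat \<Rightarrow> nat \<Rightarrow> nat \<Rightarrow> nat \<Rightarrow> bool" where
  "zero_spectrum_obstruction r N d i1 i2 i3 i4 i5 i6 i7 i8 i9 \<longleftrightarrow>
     (N i4 i1 i6 \<noteq> 0 \<and> N i5 i4 i2 \<noteq> 0 \<and> N i5 i6 i3 \<noteq> 0 \<and>
      N i7 i9 i1 \<noteq> 0 \<and> N i2 i7 i8 \<noteq> 0 \<and> N i8 i9 i3 \<noteq> 0) \<and>
     (\<Sum>k<r. N i4 i7 k * N (d i5) i8 k * N i6 (d i9) k) = 0 \<and>
     N i2 i1 i3 = 1 \<and>
     ((\<Sum>k<r. N i5 i4 k * N i3 (d i1) k) = 1 \<or>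
      (\<Sum>k<r. N i2 (d i4) k * N i3 (d i6) k) = 1 \<or>
      (\<Sum>k<r. N (d i5) i2 k * N i6 (d i1) k) = 1) \<and>
     ((\<Sum>k<r. N i2 i7 k * N i3 (d i9) k) = 1 \<or>
      (\<Sum>k<r. N i8 (d i7) k * N i3 (d i1) k) = 1 \<or>
      (\<Sum>k<r. N (d i2) i8 k * N i1 (d i9) k) = 1)"

definition passes_zero_spectrum :: "nat \<Rightarrow> (nat \<Rightarrow> nat \<Rightarrow> nat \<Rightarrow> nat) \<Rightarrow> (nat \<Rightarrow> nat) \<Rightarrow> bool" where
  "passes_zero_spectrum r N d \<longleftrightarrow>
     \<not> (\<exists>i1<r. \<exists>i2<r. \<exists>i3<r. \<exists>i4<r. \<exists>i5<r. \<exists>i6<r. \<exists>i7<r. \<exists>i8<r. \<exists>i9<r.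
          zero_spectrum_obstruction r N d i1 i2 i3 i4 i5 i6 i7 i8 i9)"

end

theory Submission
  imports Defs
begin

lemma sum_nz: "(k::nat) < r \<Longrightarrow> f k \<noteq> (0::nat) \<Longrightarrow> (\<Sum>k<r. f k) \<noteq> 0"
  by (simp add: sum_eq_0_iff) blast

lemma ifnz: "x = (if P then 1 else 0) \<Longrightarrow> (x::nat) \<noteq> 0 \<Longrightarrow> P"
  by (cases P) auto

lemma prod3: "a \<noteq> 0 \<Longrightarrow> b \<noteq> 0 \<Longrightarrow> c \<noteq> 0 \<Longrightarrow> (a::nat) * b * c \<noteq> 0"
  by simp

theorem lemma7p15:
  fixes r :: nat and N :: "nat \<Rightarrow> nat \<Rightarrow> nat \<Rightarrow> nat" and d :: "nat \<Rightarrow> nat" and k0 :: nat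
  assumes "fusion_ring r N d"
    and "k0 < r"
    and "\<And>i j. i < r \<Longrightarrow> j < r \<Longrightarrow> i \<noteq> 0 \<Longrightarrow> j \<noteq> 0 \<Longrightarrow> N i j k0 \<noteq> 0"
  shows "passes_zero_spectrum r N d"
proof -
  note fr = assms(1)[unfolded fusion_ring_def]
  have c2: "\<forall>i<r. d i < r" using fr by (rule conjunct2[THEN conjunct1])
  have c4: "\<forall>i<r. \<forall>k<r. N 0 i k = (if i = k then 1 else 0) \<and> N i 0 k = (if i = k then 1 else 0)"
    using fr by (rule conjunct2[THEN conjunct2, THEN conjunct2, THEN conjunct1])
  have c5: "\<forall>i<r. \<forall>k<r. N i k 0 = (if d i = k then 1 else 0) \<and> N k i 0 = (if d i = k then 1 else 0)"
    using fr by (rule conjunct2[THEN conjunct2, THEN conjunct2, THEN conjunct2, THEN conjunct1])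
  have c6: "\<forall>i<r. \<forall>j<r. \<forall>k<r. N i j k = N (d i) k j \<and> N i j k = N k (d j) i"
    using fr by (rule conjunct2[THEN conjunct2, THEN conjunct2, THEN conjunct2, THEN conjunct2])
  have dr: "\<And>i. i < r \<Longrightarrow> d i < r" using c2 by simp
  have L0: "\<And>i k. i < r \<Longrightarrow> k < r \<Longrightarrow> N 0 i k = (if i = k then 1 else 0)" using c4 by blast
  have R0: "\<And>i k. i < r \<Longrightarrow> k < r \<Longrightarrow> N i 0 k = (if i = k then 1 else 0)" using c4 by blast
  have Z1: "\<And>i k. i < r \<Longrightarrow> k < r \<Longrightarrow> N i k 0 = (if d i = k then 1 else 0)" using c5 by blast
  have Z2: "\<And>i k. i < r \<Longrightarrow> k < r \<Longrightarrow> N k i 0 = (if d i = k then 1 else 0)" using c5 by blast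
  have F1: "\<And>i j k. i < r \<Longrightarrow> j < r \<Longrightarrow> k < r \<Longrightarrow> N i j k = N (d i) k j" using c6 by blast
  have F2: "\<And>i j k. i < r \<Longrightarrow> j < r \<Longrightarrow> k < r \<Longrightarrow> N i j k = N k (d j) i" using c6 by blast
  have r0: "0 < r" using fr by (rule conjunct1)
  have dd: "\<And>i. i < r \<Longrightarrow> d (d i) = i"
  proof -
    fix i assume i: "i < r"
    have x: "N i (d i) 0 = 1" using Z1[OF i dr[OF i]] by simp
    have y: "N i (d i) 0 = (if d (d i) = i then 1 else 0)" using Z2[OF dr[OF i] i] .
    show "d (d i) = i" using x y by (cases "d (d i) = i") auto
  qed
  have d0: "d 0 = 0"
  proof -
    have x: "N 0 0 0 = 1" using L0[OF r0 r0] by simp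
    have y: "N 0 0 0 = (if d 0 = 0 then 1 else 0)" using Z1[OF r0 r0] .
    show ?thesis using x y by (cases "d 0 = 0") auto
  qed
  have main: "False" if b: "i1 < r" "i2 < r" "i3 < r" "i4 < r" "i5 < r" "i6 < r" "i7 < r" "i8 < r" "i9 < r"
      and z: "zero_spectrum_obstruction r N d i1 i2 i3 i4 i5 i6 i7 i8 i9"
    for i1 i2 i3 i4 i5 i6 i7 i8 i9
  proof -
    note zz = z[unfolded zero_spectrum_obstruction_def]
    have n6: "N i4 i1 i6 \<noteq> 0 \<and> N i5 i4 i2 \<noteq> 0 \<and> N i5 i6 i3 \<noteq> 0 \<and>
      N i7 i9 i1 \<noteq> 0 \<and> N i2 i7 i8 \<noteq> 0 \<and> N i8 i9 i3 \<noteq> 0" using zz by (rule conjunct1)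
    have n: "N i4 i1 i6 \<noteq> 0" "N i5 i4 i2 \<noteq> 0" "N i5 i6 i3 \<noteq> 0"
      "N i7 i9 i1 \<noteq> 0" "N i2 i7 i8 \<noteq> 0" "N i8 i9 i3 \<noteq> 0" using n6 by blast+
    have s: "(\<Sum>k<r. N i4 i7 k * N (d i5) i8 k * N i6 (d i9) k) = 0"
      using zz by (rule conjunct2[THEN conjunct1])
    have db: "d i5 < r" "d i9 < r" "d i1 < r" "d i2 < r" "d i3 < r" "d i4 < r"
      using dr b(5) b(9) b(1) b(2) b(3) b(4) by blast+
    have fin: False if k: "k < r" and t1: "N i4 i7 k \<noteq> 0" and t2: "N (d i5) i8 k \<noteq> 0"
      and t3: "N i6 (d i9) k \<noteq> 0" for k
    proof -
      have "(\<Sum>k<r. N i4 i7 k * N (d i5) i8 k * N i6 (d i9) k) \<noteq> 0"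
        by (rule sum_nz[OF k]) (rule prod3[OF t1 t2 t3])
      then show False using s by (rule notE)
    qed
    show False
    proof (cases "i4 = 0 \<or> i7 = 0 \<or> i5 = 0 \<or> i8 = 0 \<or> i6 = 0 \<or> i9 = 0")
      case False
      have nd5: "d i5 \<noteq> 0"
      proof
        assume "d i5 = 0"
        then have "d (d i5) = 0" using d0 by simp
        then show False using dd[OF b(5)] False by simp
      qed
      have nd9: "d i9 \<noteq> 0"
      proof
        assume "d i9 = 0"
        then have "d (d i9) = 0" using d0 by simp
        then show False using dd[OF b(9)] False by simp
      qed
      have n4: "i4 \<noteq> 0" and n7: "i7 \<noteq> 0" and n8: "i8 \<noteq> 0" and n6: "i6 \<noteq> 0" using False by simp_all
      show False
        using fin[OF assms(2) assms(3)[OF b(4) b(7) n4 n7] assms(3)[OF db(1) b(8) nd5 n8] assms(3)[OF b(6) db(2) n6 nd9]] .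
    next
      case True
      then show False
      proof (elim disjE)
        assume h: "i4 = 0"
        have e1: "i1 = i6" using L0[OF b(1) b(6)] n(1)[unfolded h] by (rule ifnz)
        have e2: "i5 = i2" using R0[OF b(5) b(2)] n(2)[unfolded h] by (rule ifnz)
        have t1: "N i4 i7 i7 \<noteq> 0" unfolding h using L0[OF b(7) b(7)] by simp
        have eq2: "N i2 i7 i8 = N (d i2) i8 i7" by (rule F1[OF b(2) b(7) b(8)])
        have t2: "N (d i5) i8 i7 \<noteq> 0" unfolding e2 using n(5) eq2 by simp
        have eq3: "N i7 i9 i1 = N i1 (d i9) i7" by (rule F2[OF b(7) b(9) b(1)])
        have t3: "N i6 (d i9) i7 \<noteq> 0" unfolding e1[symmetric] using n(4) eq3 by simp
        show False by (rule fin[OF b(7) t1 t2 t3])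
      next
        assume h: "i7 = 0"
        have e1: "i9 = i1" using L0[OF b(9) b(1)] n(4)[unfolded h] by (rule ifnz)
        have e2: "i2 = i8" using R0[OF b(2) b(8)] n(5)[unfolded h] by (rule ifnz)
        have t1: "N i4 i7 i4 \<noteq> 0" unfolding h using R0[OF b(4) b(4)] by simp
        have eq2: "N i5 i4 i2 = N (d i5) i2 i4" by (rule F1[OF b(5) b(4) b(2)])
        have t2: "N (d i5) i8 i4 \<noteq> 0" unfolding e2[symmetric] using n(2) eq2 by simp
        have eq3: "N i4 i1 i6 = N i6 (d i1) i4" by (rule F2[OF b(4) b(1) b(6)])
        have t3: "N i6 (d i9) i4 \<noteq> 0" unfolding e1 using n(1) eq3 by simp
        show False by (rule fin[OF b(4) t1 t2 t3])
      next
        assume h: "i5 = 0"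
        have e1: "i4 = i2" using L0[OF b(4) b(2)] n(2)[unfolded h] by (rule ifnz)
        have e2: "i6 = i3" using L0[OF b(6) b(3)] n(3)[unfolded h] by (rule ifnz)
        have t1: "N i4 i7 i8 \<noteq> 0" unfolding e1 by (rule n(5))
        have t2: "N (d i5) i8 i8 \<noteq> 0" unfolding h d0 using L0[OF b(8) b(8)] by simp
        have eq3: "N i8 i9 i3 = N i3 (d i9) i8" by (rule F2[OF b(8) b(9) b(3)])
        have t3: "N i6 (d i9) i8 \<noteq> 0" unfolding e2 using n(6) eq3 by simp
        show False by (rule fin[OF b(8) t1 t2 t3])
      next
        assume h: "i8 = 0"
        have e1: "d i2 = i7" using Z1[OF b(2) b(7)] n(5)[unfolded h] by (rule ifnz)
        have e2: "i9 = i3" using L0[OF b(9) b(3)] n(6)[unfolded h] by (rule ifnz)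
        have "N i5 i4 i2 = N (d i5) i2 i4" by (rule F1[OF b(5) b(4) b(2)])
        also have "\<dots> = N i4 (d i2) (d i5)" by (rule F2[OF db(1) b(2) b(4)])
        also have "\<dots> = N i4 i7 (d i5)" unfolding e1 ..
        finally have eq1: "N i5 i4 i2 = N i4 i7 (d i5)" .
        have t1: "N i4 i7 (d i5) \<noteq> 0" using n(2) unfolding eq1 .
        have t2: "N (d i5) i8 (d i5) \<noteq> 0" unfolding h using R0[OF db(1) db(1)] by simp
        have "N i5 i6 i3 = N (d i5) i3 i6" by (rule F1[OF b(5) b(6) b(3)])
        also have "\<dots> = N i6 (d i3) (d i5)" by (rule F2[OF db(1) b(3) b(6)])
        also have "\<dots> = N i6 (d i9) (d i5)" unfolding e2 ..
        finally have eq3: "N i5 i6 i3 = N i6 (d i9) (d i5)" .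
        have t3: "N i6 (d i9) (d i5) \<noteq> 0" using n(3) unfolding eq3 .
        show False by (rule fin[OF db(1) t1 t2 t3])
      next
        assume h: "i6 = 0"
        have e1: "d i4 = i1" using Z1[OF b(4) b(1)] n(1)[unfolded h] by (rule ifnz)
        have e2: "i5 = i3" using R0[OF b(5) b(3)] n(3)[unfolded h] by (rule ifnz)
        have "N i7 i9 i1 = N i1 (d i9) i7" by (rule F2[OF b(7) b(9) b(1)])
        also have "\<dots> = N (d i4) (d i9) i7" unfolding e1 ..
        also have "\<dots> = N (d (d i4)) i7 (d i9)" by (rule F1[OF db(6) db(2) b(7)])
        also have "\<dots> = N i4 i7 (d i9)" unfolding dd[OF b(4)] ..
        finally have eq1: "N i7 i9 i1 = N i4 i7 (d i9)" .
        have t1: "N i4 i7 (d i9) \<noteq> 0" using n(4) unfolding eq1 .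
        have "N i8 i9 i3 = N i3 (d i9) i8" by (rule F2[OF b(8) b(9) b(3)])
        also have "\<dots> = N (d i3) i8 (d i9)" by (rule F1[OF b(3) db(2) b(8)])
        also have "\<dots> = N (d i5) i8 (d i9)" unfolding e2 ..
        finally have eq2: "N i8 i9 i3 = N (d i5) i8 (d i9)" .
        have t2: "N (d i5) i8 (d i9) \<noteq> 0" using n(6) unfolding eq2 .
        have t3: "N i6 (d i9) (d i9) \<noteq> 0" unfolding h using L0[OF db(2) db(2)] by simp
        show False by (rule fin[OF db(2) t1 t2 t3])
      next
        assume h: "i9 = 0"
        have e1: "i7 = i1" using R0[OF b(7) b(1)] n(4)[unfolded h] by (rule ifnz)
        have e2: "i8 = i3" using R0[OF b(8) b(3)] n(6)[unfolded h] by (rule ifnz)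
        have t1: "N i4 i7 i6 \<noteq> 0" unfolding e1 by (rule n(1))
        have eq2: "N i5 i6 i3 = N (d i5) i3 i6" by (rule F1[OF b(5) b(6) b(3)])
        have t2: "N (d i5) i8 i6 \<noteq> 0" unfolding e2 using n(3) unfolding eq2 .
        have t3: "N i6 (d i9) i6 \<noteq> 0" unfolding h d0 using R0[OF b(6) b(6)] by simp
        show False by (rule fin[OF b(6) t1 t2 t3])
      qed
    qed
  qed
  show ?thesis unfolding passes_zero_spectrum_def
    by (intro notI, elim exE conjE, erule main; assumption)
qed

end
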